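(* Let $S$ be a polyhedron in $\mathbb{R}^{n+m}$ with points written $(x,y)$, $x\in\mathbb{R}^n$, $y\in\mathbb{R}^m$, and let $j,k\in\{1,\dots,m\}$. Suppose that every $(x,y)\in\operatorname{vert}(S)\cup\operatorname{vert}\bigl(S\cap\{(x,y)\mid y_j=y_k\}\bigr)$ satisfies $y\in\mathbb{Z}^m$. Let $\hat S=\{(x,y,\delta)\in S\times\mathbb{R}\mid y_j\le\delta\le y_k\}$ and assume $\hat S\neq\emptyset$. Then $\operatorname{proj}_{(y,\delta)}\bigl(\operatorname{vert}(\hat S)\bigr)\subseteq\mathbb{Z}^{m+1}$.
   Context: $\operatorname{vert}(S)$ denotes the set of extreme points of $S$, and $\operatorname{proj}_{(y,\delta)}$ is the projection onto the $(y,\delta)$ coordinates. *)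

theory Defs
  imports "HOL-Analysis.Analysis"
begin

end

theory Submission
  imports Defs
begin

lemma not_extreme_pm:
  fixes z v :: "'a::real_vector"
  assumes "z + v \<in> T" "z - v \<in> T" "v \<noteq> 0"
  shows "\<not> z extreme_point_of T"
proof
  assume E: "z extreme_point_of T"
  have ne: "z + v \<noteq> z - v"
  proof
    assume "z + v = z - v"
    hence "v + v = 0" by (metis add_diff_cancel_left' diff_add_cancel add.assoc add_left_imp_eq diff_self)
    hence "2 *\<^sub>R v = 0" by (simp add: scaleR_2)
    thus False using assms(3) by simp
  qed
  have "midpoint (z + v) (z - v) = z" by (simp add: midpoint_def algebra_simps scaleR_2[symmetric])
  hence "z \<in> open_segment (z + v) (z - v)" using ne midpoint_in_open_segment by metis
  thus False using E assms unfolding extreme_point_of_def by blast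
qed

lemma open_seg_dir:
  fixes z :: "'a::real_vector"
  assumes "convex T" "a \<in> T" "b \<in> T" "z \<in> open_segment a b"
  shows "\<exists>w. w \<noteq> 0 \<and> (\<forall>s. \<bar>s\<bar> \<le> 1 \<longrightarrow> z + s *\<^sub>R w \<in> T)"
proof -
  obtain u where u: "a \<noteq> b" "0 < u" "u < 1" "z = (1 - u) *\<^sub>R a + u *\<^sub>R b"
    using assms(4) in_segment(2) by blast
  define t where "t = min u (1 - u)"
  have t: "t > 0" "t \<le> u" "t \<le> 1 - u" using u by (auto simp: t_def)
  show ?thesis
  proof (intro exI conjI allI impI)
    show "t *\<^sub>R (b - a) \<noteq> 0" using t u by simp
    fix s :: real assume s: "\<bar>s\<bar> \<le> 1"
    have st: "\<bar>s * t\<bar> \<le> t" using s t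
      by (simp add: abs_mult mult_left_le_one_le)
    have "z + s *\<^sub>R t *\<^sub>R (b - a) = (1 - (u + s*t)) *\<^sub>R a + (u + s*t) *\<^sub>R b"
      using u by (simp add: algebra_simps)
    moreover have "0 \<le> u + s*t" "u + s*t \<le> 1" using st t by linarith+
    ultimately have "z + s *\<^sub>R t *\<^sub>R (b - a) \<in> closed_segment a b"
      unfolding in_segment by blast
    thus "z + s *\<^sub>R t *\<^sub>R (b - a) \<in> T"
      using closed_segment_subset assms(1-3) by blast
  qed
qed

theorem lemma3p3:
  fixes S :: "((real ^ 'n) \<times> (real ^ 'm)) set"
    and j k :: 'm
  assumes "polyhedron S"
    and "\<And>x y. (x, y) extreme_point_of S
              \<or> (x, y) extreme_point_of (S \<inter> {(x', y'). y' $ j = y' $ k})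
              \<Longrightarrow> (\<forall>i. y $ i \<in> \<int>)"
    and "{((x, y), d). (x, y) \<in> S \<and> y $ j \<le> d \<and> d \<le> y $ k} \<noteq> {}"
  shows "\<forall>x y d. ((x, y), d) extreme_point_of
              {((x, y), d). (x, y) \<in> S \<and> y $ j \<le> d \<and> d \<le> y $ k}
            \<longrightarrow> (\<forall>i. y $ i \<in> \<int>) \<and> d \<in> \<int>"
proof (intro allI impI)
  fix x y d
  define Sh where "Sh = {((x, y), d). (x, y) \<in> S \<and> y $ j \<le> (d::real) \<and> d \<le> y $ k}"
  assume E0: "((x, y), d) extreme_point_of
              {((x, y), d). (x, y) \<in> S \<and> y $ j \<le> d \<and> d \<le> y $ k}"
  hence E: "((x, y), d) extreme_point_of Sh" unfolding Sh_def .
  have cS: "convex S" using assms(1) polyhedron_imp_convex by blast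
  have mem: "(x, y) \<in> S" "y $ j \<le> d" "d \<le> y $ k"
    using E unfolding extreme_point_of_def Sh_def by auto
  have dd: "d = y $ j \<or> d = y $ k"
  proof (rule ccontr)
    assume "\<not> ?thesis"
    hence l: "y $ j < d" "d < y $ k" using mem by auto
    define e where "e = min (d - y $ j) (y $ k - d)"
    have e: "e > 0" "e \<le> d - y $ j" "e \<le> y $ k - d" using l by (auto simp: e_def)
    have "((x, y), d) + ((0, 0), e) \<in> Sh" "((x, y), d) - ((0, 0), e) \<in> Sh"
      using mem e by (auto simp: Sh_def)
    moreover have "((0, 0), e) \<noteq> (0 :: ((real ^ 'n) \<times> (real ^ 'm)) \<times> real)"
      using e by (simp add: zero_prod_def)
    ultimately show False using not_extreme_pm E by blast
  qed
  have yint: "\<forall>i. y $ i \<in> \<int>"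
  proof (cases "y $ j = y $ k")
    case True
    have dj: "d = y $ j" using dd True by auto
    have cH: "convex (S \<inter> {(x', y'). y' $ j = y' $ k})"
    proof (rule convex_Int[OF cS])
      show "convex {(x'::real^'n, y'::real^'m). y' $ j = y' $ k}"
        unfolding convex_def
      proof (intro ballI allI impI)
        fix p q :: "(real^'n) \<times> (real^'m)" and u v :: real
        assume pq: "p \<in> {(x', y'). y' $ j = y' $ k}" "q \<in> {(x', y'). y' $ j = y' $ k}"
        hence "snd p $ j = snd p $ k" "snd q $ j = snd q $ k" by (auto simp: case_prod_beta)
        thus "u *\<^sub>R p + v *\<^sub>R q \<in> {(x', y'). y' $ j = y' $ k}"
          by (simp add: case_prod_beta)
      qed
    qed
    have "(x, y) extreme_point_of (S \<inter> {(x', y'). y' $ j = y' $ k})"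
      unfolding extreme_point_of_def
    proof (intro conjI ballI notI)
      show "(x, y) \<in> S \<inter> {(x', y'). y' $ j = y' $ k}" using mem True by auto
    next
      fix a b assume ab: "a \<in> S \<inter> {(x', y'). y' $ j = y' $ k}" "b \<in> S \<inter> {(x', y'). y' $ j = y' $ k}"
        "(x, y) \<in> open_segment a b"
      obtain w where w: "w \<noteq> 0" "\<And>s. \<bar>s\<bar> \<le> 1 \<Longrightarrow> (x, y) + s *\<^sub>R w \<in> S \<inter> {(x', y'). y' $ j = y' $ k}"
        using open_seg_dir[OF cH ab] by blast
      obtain wx wy where wxy: "w = (wx, wy)" by fastforce
      have p: "(x, y) + w \<in> S \<inter> {(x', y'). y' $ j = y' $ k}"
        using w(2)[of 1] by simp
      have m: "(x, y) - w \<in> S \<inter> {(x', y'). y' $ j = y' $ k}"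
        using w(2)[of "-1"] by simp
      have "((x, y), d) + (w, wy $ j) \<in> Sh"
        using p dj by (auto simp: Sh_def wxy)
      moreover have "((x, y), d) - (w, wy $ j) \<in> Sh"
        using m dj by (auto simp: Sh_def wxy)
      moreover have "(w, wy $ j) \<noteq> 0" using w(1) by (simp add: zero_prod_def)
      ultimately show False using not_extreme_pm E by blast
    qed
    thus ?thesis using assms(2) by blast
  next
    case False
    hence g: "y $ j < y $ k" using mem by auto
    have "(x, y) extreme_point_of S"
      unfolding extreme_point_of_def
    proof (intro conjI ballI notI)
      show "(x, y) \<in> S" using mem by auto
    next
      fix a b assume ab: "a \<in> S" "b \<in> S" "(x, y) \<in> open_segment a b"
      obtain w where w: "w \<noteq> 0" "\<And>s. \<bar>s\<bar> \<le> 1 \<Longrightarrow> (x, y) + s *\<^sub>R w \<in> S"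
        using open_seg_dir[OF cS ab] by blast
      obtain wx wy where wxy: "w = (wx, wy)" by fastforce
      define G where "G = y $ k - y $ j"
      define D where "D = \<bar>wy $ j - wy $ k\<bar> + 1"
      define s where "s = min 1 (G / D)"
      have G: "G > 0" using g by (simp add: G_def)
      have D: "D > 0" "\<bar>wy $ j - wy $ k\<bar> \<le> D" by (auto simp: D_def)
      have s: "s > 0" "s \<le> 1" using G D by (auto simp: s_def)
      have sD: "s * D \<le> G" using G D
        by (simp add: s_def min_def field_simps)
      have key: "s * \<bar>wy $ j - wy $ k\<bar> \<le> G"
        by (meson D(2) mult_left_mono order_trans s(1) less_imp_le sD)
      define c where "c = (if d = y $ j then wy $ j else wy $ k)"
      have p: "(x, y) + s *\<^sub>R w \<in> S" using w(2)[of s] s by simp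
      have m: "(x, y) - s *\<^sub>R w \<in> S" using w(2)[of "-s"] s by simp
      have k1: "s * (wy $ j - wy $ k) \<le> G" "s * (wy $ k - wy $ j) \<le> G"
        using key by (smt (verit) abs_ge_self abs_minus_commute mult_left_mono s(1))+
      have "((x, y), d) + (s *\<^sub>R w, s * c) \<in> Sh"
      proof -
        have A: "(y + s *\<^sub>R wy) $ j = y $ j + s * wy $ j" "(y + s *\<^sub>R wy) $ k = y $ k + s * wy $ k"
          by simp_all
        have B: "(y + s *\<^sub>R wy) $ j \<le> d + s * c \<and> d + s * c \<le> (y + s *\<^sub>R wy) $ k"
          unfolding A c_def using dd k1 mem(2,3) unfolding G_def by (cases "d = y $ j") (auto simp: algebra_simps)
        show ?thesis using p B unfolding Sh_def wxy by simp
      qed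
      moreover have "((x, y), d) - (s *\<^sub>R w, s * c) \<in> Sh"
      proof -
        have A: "(y - s *\<^sub>R wy) $ j = y $ j - s * wy $ j" "(y - s *\<^sub>R wy) $ k = y $ k - s * wy $ k"
          by simp_all
        have B: "(y - s *\<^sub>R wy) $ j \<le> d - s * c \<and> d - s * c \<le> (y - s *\<^sub>R wy) $ k"
          unfolding A c_def using dd k1 mem(2,3) unfolding G_def by (cases "d = y $ j") (auto simp: algebra_simps)
        show ?thesis using m B unfolding Sh_def wxy by simp
      qed
      moreover have "(s *\<^sub>R w, s * c) \<noteq> 0" using w(1) s by (metis less_irrefl prod.inject scaleR_eq_0_iff zero_prod_def)
      ultimately show False using not_extreme_pm E by blast
    qed
    thus ?thesis using assms(2) by blast
  qed
  moreover have "d \<in> \<int>" using dd yint by auto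
  ultimately show "(\<forall>i. y $ i \<in> \<int>) \<and> d \<in> \<int>" by blast
qed

end
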